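(* Let $\alpha_1\ge\alpha_2\ge\cdots\ge\alpha_d>0$ and let $\beta_1,\dots,\beta_d$ be a permutation of $\alpha_1,\dots,\alpha_d$. Then \[ \sum_{i=1}^d(\sqrt{\alpha_i}-\sqrt{\beta_i})^2\le2\sum_{j=1}^{d-1}\frac{\alpha_j-\alpha_{j+1}}{\alpha_j}\sum_{i=1}^j(\alpha_i-\beta_i). \] *)

theory Defs
  imports Complex_Main "HOL-Combinatorics.Permutations"
begin

end

theory Submission
  imports Defs
begin

lemma down_step:
  fixes x y z :: real assumes "0<z" "z\<le>y" "y\<le>x"
  shows "(x-z)^2 \<le> (y-z)^2 + 2*((x^2-y^2)/x^2 * ((x^2+y^2)/2 - z^2))"
proof -
  have x: "x > 0" using assms by linarith
  have k1: "2*z*x^2 - (x+y)*z^2 \<ge> 0"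
  proof -
    have "y*z^2 \<le> x*z^2" using assms by (simp add: mult_right_mono)
    moreover have "x*z^2 \<le> z*x^2" using assms x
      by (simp add: power2_eq_square mult_left_mono mult.assoc mult.left_commute)
    ultimately show ?thesis by (simp add: algebra_simps)
  qed
  have k2: "(x+y)*(y^2-z^2) \<ge> 0" using assms
    by (intro mult_nonneg_nonneg) (auto intro: power_mono)
  have key: "(x+y)*(y^2-2*z^2)+2*z*x^2 \<ge> 0" using k1 k2 by (simp add: algebra_simps)
  have e1: "(x-z)^2 - (y-z)^2 = (x-y)*(x+y-2*z)" by (simp add: power2_eq_square algebra_simps)
  have e2: "2*((x^2-y^2)/x^2 * ((x^2+y^2)/2 - z^2)) = (x-y)*((x+y)*(x^2+y^2-2*z^2))/x^2"
    using x by (simp add: field_simps power2_eq_square)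
  have "(x-y)*(x+y-2*z)*x^2 \<le> (x-y)*((x+y)*(x^2+y^2-2*z^2))"
  proof -
    have "(x-y)*((x+y)*(x^2+y^2-2*z^2)) - (x-y)*(x+y-2*z)*x^2 = (x-y)*((x+y)*(y^2-2*z^2)+2*z*x^2)"
      by (simp add: power2_eq_square algebra_simps)
    moreover have "(x-y)*((x+y)*(y^2-2*z^2)+2*z*x^2) \<ge> 0" using key assms by simp
    ultimately show ?thesis by linarith
  qed
  hence "(x-y)*(x+y-2*z) \<le> (x-y)*((x+y)*(x^2+y^2-2*z^2))/x^2"
    using x by (simp add: le_divide_eq)
  thus ?thesis using e1 e2 by linarith
qed

lemma up_step:
  fixes x y z :: real assumes "0<z" "z\<le>y" "y\<le>x"
  shows "(x-z)^2 \<le> (x-y)^2 + 2*((y^2-z^2)/y^2 * (x^2 - (y^2+z^2)/2))"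
proof -
  have y: "y > 0" using assms by linarith
  have e1: "(x-z)^2 - (x-y)^2 = (y-z)*(2*x-y-z)" by (simp add: power2_eq_square algebra_simps)
  have e2: "2*((y^2-z^2)/y^2 * (x^2 - (y^2+z^2)/2)) = (y-z)*((y+z)*(2*x^2-y^2-z^2))/y^2"
    using y by (simp add: field_simps power2_eq_square)
  have g: "y^2 \<le> (y+z)*(x+y)"
  proof -
    have "y^2 \<le> y*(x+y)" using assms by (simp add: power2_eq_square algebra_simps)
    also have "\<dots> \<le> (y+z)*(x+y)" using assms by (intro mult_right_mono) auto
    finally show ?thesis .
  qed
  have f1: "(x-y)*((y+z)*(x+y) - y^2) \<ge> 0" using assms g by simp
  have f2: "(y-z)*((y+z)^2 - y^2) \<ge> 0" using assms
    by (intro mult_nonneg_nonneg) (auto simp: power2_eq_square algebra_simps)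
  have "(y+z)*(2*x^2-y^2-z^2) - (2*x-y-z)*y^2 = 2*((x-y)*((y+z)*(x+y) - y^2)) + (y-z)*((y+z)^2 - y^2)"
    by (simp add: power2_eq_square algebra_simps)
  hence "(2*x-y-z)*y^2 \<le> (y+z)*(2*x^2-y^2-z^2)" using f1 f2 by linarith
  hence "(y-z)*(2*x-y-z)*y^2 \<le> (y-z)*((y+z)*(2*x^2-y^2-z^2))" using assms
    by (metis diff_ge_0_iff_ge mult.assoc mult_left_mono)
  hence "(y-z)*(2*x-y-z) \<le> (y-z)*((y+z)*(2*x^2-y^2-z^2))/y^2"
    using y by (simp add: le_divide_eq)
  thus ?thesis using e1 e2 by linarith
qed

lemma chain_down:
  fixes v :: "nat \<Rightarrow> real"
  assumes "\<And>j. p \<le> j \<Longrightarrow> j \<le> q \<Longrightarrow> 0 < v j"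
    and "\<And>i j. p \<le> i \<Longrightarrow> i \<le> j \<Longrightarrow> j \<le> q \<Longrightarrow> v j \<le> v i"
    and "p \<le> q"
  shows "(sqrt (v p) - sqrt (v q))^2 \<le> 2 * (\<Sum>j\<in>{p..<q}. (v j - v (j+1)) / v j * ((v j + v (j+1))/2 - v q))"
  using assms
proof (induction "q - p" arbitrary: p)
  case 0
  then show ?case by simp
next
  case (Suc n)
  have pq: "p < q" using Suc by linarith
  have IH: "(sqrt (v (Suc p)) - sqrt (v q))^2 \<le> 2 * (\<Sum>j\<in>{Suc p..<q}. (v j - v (j+1)) / v j * ((v j + v (j+1))/2 - v q))"
    using Suc.prems Suc.hyps(2) pq by (intro Suc.hyps) auto
  have vp: "v p > 0" "v (Suc p) > 0" "v q > 0" using Suc.prems pq by auto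
  have m1: "v q \<le> v (Suc p)" "v (Suc p) \<le> v p" using Suc.prems pq by auto
  have st: "(sqrt (v p) - sqrt (v q))^2 \<le> (sqrt (v (Suc p)) - sqrt (v q))^2
     + 2*((v p - v (Suc p))/v p * ((v p + v (Suc p))/2 - v q))"
    using down_step[of "sqrt (v q)" "sqrt (v (Suc p))" "sqrt (v p)"] vp m1 by simp
  have sp: "{p..<q} = insert p {Suc p..<q}" using pq by auto
  show ?case using st IH unfolding sp by (simp add: algebra_simps)
qed

lemma chain_up:
  fixes v :: "nat \<Rightarrow> real"
  assumes "\<And>j. p \<le> j \<Longrightarrow> j \<le> q \<Longrightarrow> 0 < v j"
    and "\<And>i j. p \<le> i \<Longrightarrow> i \<le> j \<Longrightarrow> j \<le> q \<Longrightarrow> v j \<le> v i"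
    and "p \<le> q"
  shows "(sqrt (v p) - sqrt (v q))^2 \<le> 2 * (\<Sum>j\<in>{p..<q}. (v j - v (j+1)) / v j * (v p - (v j + v (j+1))/2))"
  using assms
proof (induction "q - p" arbitrary: q)
  case 0
  then show ?case by simp
next
  case (Suc n)
  have pq: "p < q" using Suc by linarith
  then obtain r where r: "q = Suc r" by (cases q) auto
  have pr: "p \<le> r" using pq r by simp
  have IH: "(sqrt (v p) - sqrt (v r))^2 \<le> 2 * (\<Sum>j\<in>{p..<r}. (v j - v (j+1)) / v j * (v p - (v j + v (j+1))/2))"
    using Suc.prems Suc.hyps(2) r pr by (intro Suc.hyps) auto
  have vp: "v p > 0" "v r > 0" "v q > 0" using Suc.prems pq r by auto
  have m1: "v q \<le> v r" "v r \<le> v p" using Suc.prems pq r by auto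
  have st: "(sqrt (v p) - sqrt (v q))^2 \<le> (sqrt (v p) - sqrt (v r))^2
     + 2*((v r - v q)/v r * (v p - (v r + v q)/2))"
    using up_step[of "sqrt (v q)" "sqrt (v r)" "sqrt (v p)"] vp m1 by simp
  show ?case using st IH pr unfolding r by (simp add: algebra_simps)
qed


lemma perm_reindex:
  fixes \<sigma> :: "nat \<Rightarrow> nat" and f :: "nat \<Rightarrow> real"
  assumes p: "\<sigma> permutes {1..d}" and jd: "j \<le> d"
  shows "(\<Sum>i=1..j. f i) = (\<Sum>i\<in>{i\<in>{1..d}. \<sigma> i \<le> j}. f (\<sigma> i))"
proof -
  have "bij_betw \<sigma> {i\<in>{1..d}. \<sigma> i \<le> j} {1..j}"
  proof (rule bij_betw_imageI)
    show "inj_on \<sigma> {i \<in> {1..d}. \<sigma> i \<le> j}" using permutes_inj[OF p] by (auto intro: inj_on_subset)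
    show "\<sigma> ` {i \<in> {1..d}. \<sigma> i \<le> j} = {1..j}"
    proof
      show "\<sigma> ` {i \<in> {1..d}. \<sigma> i \<le> j} \<subseteq> {1..j}"
      proof
        fix k assume "k \<in> \<sigma> ` {i \<in> {1..d}. \<sigma> i \<le> j}"
        then obtain i where i: "i \<in> {1..d}" "\<sigma> i \<le> j" "k = \<sigma> i" by auto
        have "\<sigma> i \<in> {1..d}" using permutes_in_image[OF p] i(1) by simp
        thus "k \<in> {1..j}" using i by auto
      qed
      show "{1..j} \<subseteq> \<sigma> ` {i \<in> {1..d}. \<sigma> i \<le> j}"
      proof
        fix k assume k: "k \<in> {1..j}"
        have "inv \<sigma> k \<in> {1..d}" using k jd permutes_in_image[OF permutes_inv[OF p]] by auto
        moreover have "\<sigma> (inv \<sigma> k) = k" using permutes_inverses(1)[OF p] by simp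
        ultimately show "k \<in> \<sigma> ` {i \<in> {1..d}. \<sigma> i \<le> j}" using k
          by (metis (mono_tags, lifting) atLeastAtMost_iff image_eqI mem_Collect_eq)
      qed
    qed
  qed
  thus ?thesis by (simp add: sum.reindex_bij_betw)
qed

lemma perm_diff:
  fixes \<sigma> :: "nat \<Rightarrow> nat" and f :: "nat \<Rightarrow> real"
  assumes p: "\<sigma> permutes {1..d}" and jd: "j \<le> d"
  shows "(\<Sum>i=1..j. f i) - (\<Sum>i=1..j. f (\<sigma> i)) =
    (\<Sum>i\<in>{i\<in>{1..d}. j<i \<and> \<sigma> i \<le> j}. f (\<sigma> i)) - (\<Sum>i\<in>{i\<in>{1..d}. i \<le> j \<and> j < \<sigma> i}. f (\<sigma> i))"
proof -
  let ?C = "{i\<in>{1..d}. i \<le> j \<and> \<sigma> i \<le> j}"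
  let ?P = "{i\<in>{1..d}. j<i \<and> \<sigma> i \<le> j}"
  let ?Q = "{i\<in>{1..d}. i \<le> j \<and> j < \<sigma> i}"
  have e1: "{i\<in>{1..d}. \<sigma> i \<le> j} = ?C \<union> ?P" by auto
  have e2: "{1..j} = ?C \<union> ?Q" using jd by auto
  have s1: "(\<Sum>i\<in>{i\<in>{1..d}. \<sigma> i \<le> j}. f (\<sigma> i)) = (\<Sum>i\<in>?C. f (\<sigma> i)) + (\<Sum>i\<in>?P. f (\<sigma> i))"
    unfolding e1 by (rule sum.union_disjoint) auto
  have s2: "(\<Sum>i=1..j. f (\<sigma> i)) = (\<Sum>i\<in>?C. f (\<sigma> i)) + (\<Sum>i\<in>?Q. f (\<sigma> i))"
    unfolding e2 by (rule sum.union_disjoint) auto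
  show ?thesis using perm_reindex[OF p jd, of f] s1 s2 by simp
qed


theorem mainTheorem14:
  fixes d :: nat and \<alpha> :: "nat \<Rightarrow> real" and \<sigma> :: "nat \<Rightarrow> nat"
  assumes mono: "\<And>i j. 1 \<le> i \<Longrightarrow> i \<le> j \<Longrightarrow> j \<le> d \<Longrightarrow> \<alpha> j \<le> \<alpha> i"
    and pos: "\<And>i. 1 \<le> i \<Longrightarrow> i \<le> d \<Longrightarrow> \<alpha> i > 0"
    and perm: "\<sigma> permutes {1..d}"
  shows "(\<Sum>i=1..d. (sqrt (\<alpha> i) - sqrt (\<alpha> (\<sigma> i)))^2)
    \<le> 2 * (\<Sum>j=1..d-1. (\<alpha> j - \<alpha> (j+1)) / \<alpha> j * (\<Sum>i=1..j. \<alpha> i - \<alpha> (\<sigma> i)))"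
proof -
  define L where "L j = (\<alpha> j + \<alpha> (j+1))/2" for j
  define c where "c j = (\<alpha> j - \<alpha> (j+1)) / \<alpha> j" for j
  define D where "D j i = (if i \<le> j \<and> j < \<sigma> i then L j - \<alpha> (\<sigma> i) else 0)
      + (if j < i \<and> \<sigma> i \<le> j then \<alpha> (\<sigma> i) - L j else 0)" for j i
  have sig: "\<sigma> i \<in> {1..d}" if "i \<in> {1..d}" for i using permutes_in_image[OF perm] that by simp
  have SD: "(\<Sum>i=1..j. \<alpha> i - \<alpha> (\<sigma> i)) = (\<Sum>i\<in>{1..d}. D j i)" if j: "j \<in> {1..d-1}" for j
  proof -
    have jd: "j \<le> d" using j by auto
    have "(\<Sum>i=1..j. \<alpha> i - L j) - (\<Sum>i=1..j. \<alpha> (\<sigma> i) - L j) =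
      (\<Sum>i\<in>{i\<in>{1..d}. j<i \<and> \<sigma> i \<le> j}. \<alpha> (\<sigma> i) - L j) - (\<Sum>i\<in>{i\<in>{1..d}. i \<le> j \<and> j < \<sigma> i}. \<alpha> (\<sigma> i) - L j)"
      by (rule perm_diff[OF perm jd])
    moreover have "(\<Sum>i=1..j. \<alpha> i - L j) - (\<Sum>i=1..j. \<alpha> (\<sigma> i) - L j) = (\<Sum>i=1..j. \<alpha> i - \<alpha> (\<sigma> i))"
      by (simp add: sum_subtractf)
    moreover have "(\<Sum>i\<in>{1..d}. D j i) = (\<Sum>i\<in>{i\<in>{1..d}. i \<le> j \<and> j < \<sigma> i}. L j - \<alpha> (\<sigma> i))
        + (\<Sum>i\<in>{i\<in>{1..d}. j<i \<and> \<sigma> i \<le> j}. \<alpha> (\<sigma> i) - L j)"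
      unfolding D_def by (simp only: sum.distrib sum.inter_filter[OF finite_atLeastAtMost])
    moreover have "(\<Sum>i\<in>{i\<in>{1..d}. i \<le> j \<and> j < \<sigma> i}. L j - \<alpha> (\<sigma> i)) =
        - (\<Sum>i\<in>{i\<in>{1..d}. i \<le> j \<and> j < \<sigma> i}. \<alpha> (\<sigma> i) - L j)"
      by (simp add: sum_negf[symmetric])
    ultimately show ?thesis by linarith
  qed
  have R: "(\<Sum>j=1..d-1. (\<alpha> j - \<alpha> (j+1)) / \<alpha> j * (\<Sum>i=1..j. \<alpha> i - \<alpha> (\<sigma> i)))
      = (\<Sum>i\<in>{1..d}. \<Sum>j=1..d-1. c j * D j i)"
  proof -
    have "(\<Sum>j=1..d-1. (\<alpha> j - \<alpha> (j+1)) / \<alpha> j * (\<Sum>i=1..j. \<alpha> i - \<alpha> (\<sigma> i)))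
       = (\<Sum>j=1..d-1. c j * (\<Sum>i\<in>{1..d}. D j i))"
      using SD unfolding c_def by (intro sum.cong) auto
    also have "\<dots> = (\<Sum>j=1..d-1. \<Sum>i\<in>{1..d}. c j * D j i)" by (simp add: sum_distrib_left)
    also have "\<dots> = (\<Sum>i\<in>{1..d}. \<Sum>j=1..d-1. c j * D j i)" by (rule sum.swap)
    finally show ?thesis .
  qed
  have T: "(sqrt (\<alpha> i) - sqrt (\<alpha> (\<sigma> i)))^2 \<le> 2 * (\<Sum>j=1..d-1. c j * D j i)" if i: "i \<in> {1..d}" for i
  proof -
    have si: "\<sigma> i \<in> {1..d}" using sig i .
    consider "i < \<sigma> i" | "\<sigma> i < i" | "\<sigma> i = i" by linarith
    then show ?thesis
    proof cases
      case 1
      have "(\<Sum>j=1..d-1. c j * D j i) = (\<Sum>j=1..d-1. if j \<in> {i..<\<sigma> i} then c j * (L j - \<alpha> (\<sigma> i)) else 0)"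
        using 1 unfolding D_def by (intro sum.cong) auto
      also have "\<dots> = (\<Sum>j\<in>{i..<\<sigma> i}. c j * (L j - \<alpha> (\<sigma> i)))"
      proof -
        have "{1..d-1} \<inter> {i..<\<sigma> i} = {i..<\<sigma> i}" using i si by auto
        thus ?thesis by (simp only: sum.inter_restrict[OF finite_atLeastAtMost, symmetric])
      qed
      finally have e: "(\<Sum>j=1..d-1. c j * D j i) = (\<Sum>j\<in>{i..<\<sigma> i}. c j * (L j - \<alpha> (\<sigma> i)))" .
      have "(sqrt (\<alpha> i) - sqrt (\<alpha> (\<sigma> i)))^2 \<le> 2 * (\<Sum>j\<in>{i..<\<sigma> i}. (\<alpha> j - \<alpha> (j+1)) / \<alpha> j * ((\<alpha> j + \<alpha> (j+1))/2 - \<alpha> (\<sigma> i)))"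
        using i si 1 by (intro chain_down) (auto intro: pos mono)
      thus ?thesis unfolding e by (simp add: c_def L_def)
    next
      case 2
      have "(\<Sum>j=1..d-1. c j * D j i) = (\<Sum>j=1..d-1. if j \<in> {\<sigma> i..<i} then c j * (\<alpha> (\<sigma> i) - L j) else 0)"
        using 2 unfolding D_def by (intro sum.cong) auto
      also have "\<dots> = (\<Sum>j\<in>{\<sigma> i..<i}. c j * (\<alpha> (\<sigma> i) - L j))"
      proof -
        have "{1..d-1} \<inter> {\<sigma> i..<i} = {\<sigma> i..<i}" using i si by auto
        thus ?thesis by (simp only: sum.inter_restrict[OF finite_atLeastAtMost, symmetric])
      qed
      finally have e: "(\<Sum>j=1..d-1. c j * D j i) = (\<Sum>j\<in>{\<sigma> i..<i}. c j * (\<alpha> (\<sigma> i) - L j))" .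
      have "(sqrt (\<alpha> (\<sigma> i)) - sqrt (\<alpha> i))^2 \<le> 2 * (\<Sum>j\<in>{\<sigma> i..<i}. (\<alpha> j - \<alpha> (j+1)) / \<alpha> j * (\<alpha> (\<sigma> i) - (\<alpha> j + \<alpha> (j+1))/2))"
        using i si 2 by (intro chain_up) (auto intro: pos mono)
      thus ?thesis unfolding e by (simp add: c_def L_def power2_commute)
    next
      case 3
      have "(\<Sum>j=1..d-1. c j * D j i) = 0" using 3 unfolding D_def by (intro sum.neutral) auto
      thus ?thesis using 3 by simp
    qed
  qed
  have "(\<Sum>i=1..d. (sqrt (\<alpha> i) - sqrt (\<alpha> (\<sigma> i)))^2) \<le> (\<Sum>i\<in>{1..d}. 2 * (\<Sum>j=1..d-1. c j * D j i))"
    using T by (rule sum_mono)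
  also have "\<dots> = 2 * (\<Sum>j=1..d-1. (\<alpha> j - \<alpha> (j+1)) / \<alpha> j * (\<Sum>i=1..j. \<alpha> i - \<alpha> (\<sigma> i)))"
    unfolding R by (simp add: sum_distrib_left)
  finally show ?thesis .
qed

end
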